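(* Consider the discrete-time system $x_{k+1}=(I-\varepsilon\Delta)x_k+\varepsilon\pi A\psi(x_k)$, with $\pi>0$, each $\psi_i$ satisfying (A1)–(A4), and step size $0<\varepsilon<\frac{2}{\max_i\delta_i}$. Suppose the system admits a period-2 orbit: there is $K\ge0$ such that $x_{K+1}\neq x_K$ and $x_{k+2}=x_k$ for all $k\ge K$. Then $\pi>\pi_{1,d}$.
   Context: Let $\mathcal G$ be an undirected, connected signed graph on $n$ nodes without self-loops, with symmetric adjacency matrix $A=[a_{ij}]$ having zero diagonal and entries of either sign. Let $\delta_i=\sum_j|a_{ij}|>0$ and $\Delta=\mathrm{diag}(\delta_i)$. For $\pi>0$ let $L_\pi=\Delta-\pi A$. Define $\pi_{1,d}$ as the smallest $\pi>0$ at which the largest eigenvalue satisfies $\lambda_n(L_\pi)=2/\varepsilon$, equivalently the smallest eigenvalue of $J_\pi=I-\varepsilon L_\pi$ equals $-1$. Each $\psi_i:\mathbb R\to\mathbb R$ is smooth and satisfies: (A1) $\psi_i$ is odd; (A2) $\psi_i'>0$ everywhere and $\psi_i'(0)=1$; (A3) $\lim_{s\to\pm\infty}\psi_i(s)=\pm1$; (A4) $\psi_i$ is strictly convex for $s<0$ and strictly concave for $s>0$. Here $\psi(x)=(\psi_i(x_i))_i$. *)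

theory Defs
  imports "HOL-Analysis.Analysis"
begin

definition smooth_fun :: "(real \<Rightarrow> real) \<Rightarrow> bool" where
  "smooth_fun f \<longleftrightarrow> (\<forall>k x. ((deriv ^^ k) f) differentiable (at x))"

definition strict_convex_on :: "real set \<Rightarrow> (real \<Rightarrow> real) \<Rightarrow> bool" where
  "strict_convex_on S f \<longleftrightarrow> convex S \<and>
     (\<forall>x\<in>S. \<forall>y\<in>S. \<forall>u::real. x \<noteq> y \<and> 0 < u \<and> u < 1 \<longrightarrow>
        f ((1 - u) * x + u * y) < (1 - u) * f x + u * f y)"

definition strict_concave_on :: "real set \<Rightarrow> (real \<Rightarrow> real) \<Rightarrow> bool" where
  "strict_concave_on S f \<longleftrightarrow> strict_convex_on S (\<lambda>x. - f x)"

definition admissible_psi :: "(real \<Rightarrow> real) \<Rightarrow> bool" where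
  "admissible_psi f \<longleftrightarrow> smooth_fun f
     \<and> (\<forall>s. f (- s) = - f s)
     \<and> (\<forall>s. deriv f s > 0) \<and> deriv f 0 = 1
     \<and> (f \<longlongrightarrow> 1) at_top \<and> (f \<longlongrightarrow> -1) at_bot
     \<and> strict_convex_on {..<0} f \<and> strict_concave_on {0<..} f"

definition connected_signed_graph :: "real^'n^'n \<Rightarrow> bool" where
  "connected_signed_graph A \<longleftrightarrow>
     (\<forall>i j. A $ i $ j = A $ j $ i) \<and> (\<forall>i. A $ i $ i = 0)
     \<and> (\<forall>i j. (i, j) \<in> {(p, q). A $ p $ q \<noteq> 0}\<^sup>*)"

definition sdegree :: "real^'n^'n \<Rightarrow> 'n::finite \<Rightarrow> real" where
  "sdegree A i = (\<Sum>j\<in>UNIV. \<bar>A $ i $ j\<bar>)"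

definition Delta_mat :: "real^'n^'n \<Rightarrow> real^'n^'n" where
  "Delta_mat A = (\<chi> i j. if i = j then sdegree A i else 0)"

definition L_pi :: "real^'n^'n \<Rightarrow> real \<Rightarrow> real^'n^'n" where
  "L_pi A p = Delta_mat A - p *\<^sub>R A"

definition eigenvalues :: "real^'n^'n \<Rightarrow> real set" where
  "eigenvalues M = {l. \<exists>v. v \<noteq> 0 \<and> M *v v = l *\<^sub>R v}"

text \<open>Largest eigenvalue lambda_n (for symmetric matrices the set of eigenvalues is finite and nonempty).\<close>
definition lambda_max :: "real^'n^'n \<Rightarrow> real" where
  "lambda_max M = Max (eigenvalues M)"

definition pi_1d :: "real^'n^'n \<Rightarrow> real \<Rightarrow> real" where
  "pi_1d A eps = Inf {p. p > 0 \<and> lambda_max (L_pi A p) = 2 / eps}"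

end

theory Submission
  imports Defs
begin


lemma strict_imp_convex:
  assumes "strict_convex_on S f" shows "convex_on S f"
proof -
  have cS: "convex S" using assms unfolding strict_convex_on_def by simp
  show ?thesis unfolding convex_on_def
  proof (intro conjI cS ballI allI impI)
    fix x y u v :: real assume xy: "x \<in> S" "y \<in> S" and uv: "0 \<le> u" "0 \<le> v" "u + v = 1"
    show "f (u *\<^sub>R x + v *\<^sub>R y) \<le> u * f x + v * f y"
    proof (cases "x = y \<or> v = 0 \<or> v = 1")
      case True
      moreover have "u * y + v * y = (u+v)*y" "u * f y + v * f y = (u+v) * f y"
        by (simp_all add: distrib_right)
      ultimately show ?thesis using uv by (auto simp: algebra_simps)
    next
      case False
      then have "f ((1 - v) * x + v * y) < (1 - v) * f x + v * f y"
        using assms xy uv unfolding strict_convex_on_def by auto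
      moreover have "u = 1 - v" using uv by simp
      ultimately show ?thesis by simp
    qed
  qed
qed

lemma scD: assumes "strict_convex_on S f" "x \<in> S" "y \<in> S" "x \<noteq> y" "0 < u" "u < 1"
  shows "f ((1 - u) * x + u * y) < (1 - u) * f x + u * f y"
  using assms unfolding strict_convex_on_def by blast

lemma adm_diff: assumes "admissible_psi f" shows "f differentiable (at x)"
  using assms unfolding admissible_psi_def smooth_fun_def
  by (metis funpow_0)

lemma adm_DERIV: assumes "admissible_psi f" shows "(f has_real_derivative deriv f x) (at x)"
  using adm_diff[OF assms] DERIV_deriv_iff_real_differentiable by blast

lemma adm_deriv_cont: assumes "admissible_psi f" shows "isCont (deriv f) x"
proof -
  have "((deriv ^^ 1) f) differentiable (at x)"
    using assms unfolding admissible_psi_def smooth_fun_def by blast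
  then have "deriv f differentiable (at x)" by simp
  then show ?thesis by (rule differentiable_imp_continuous_within)
qed

lemma adm_mono: assumes "admissible_psi f" "u < v" shows "f u < f v"
  apply (rule DERIV_pos_imp_increasing[OF assms(2)])
  using adm_DERIV[OF assms(1)] assms(1) unfolding admissible_psi_def by blast

lemma adm_deriv_le1: assumes a: "admissible_psi f" shows "deriv f s \<le> 1"
proof -
  have d0: "deriv f 0 = 1" using a unfolding admissible_psi_def by simp
  have cont: "isCont (deriv f) 0" by (rule adm_deriv_cont[OF a])
  have DF: "(f has_real_derivative deriv f z) (at z)" for z by (rule adm_DERIV[OF a])
  have pos: "deriv f s \<le> deriv f t" if t0: "0 < t" and ts: "t < s" for t
  proof -
    have sc: "strict_convex_on {0<..} (\<lambda>x. - f x)"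
      using a unfolding admissible_psi_def strict_concave_on_def by simp
    have cv: "convex_on {0<..} (\<lambda>x. - f x)" by (rule strict_imp_convex[OF sc])
    have D: "((\<lambda>x. - f x) has_field_derivative - deriv f z) (at z within {0<..})" for z
      by (rule has_field_derivative_at_within[OF DERIV_minus[OF DF]])
    have cn: "connected ({0<..} :: real set)" by simp
    have int: "interior ({0<..} :: real set) = {0<..}" by (simp add: interior_open)
    have s0: "s \<in> {0<..}" "t \<in> {0<..}" using t0 ts by auto
    have "- f s - (- f t) \<ge> (- deriv f t) * (s - t)"
      using convex_on_imp_above_tangent[OF cv cn _ _ D, of t s] s0 int by simp
    moreover have "- f t - (- f s) \<ge> (- deriv f s) * (t - s)"
      using convex_on_imp_above_tangent[OF cv cn _ _ D, of s t] s0 int by simp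
    ultimately have "(deriv f s - deriv f t) * (s - t) \<le> 0" by (simp add: algebra_simps)
    then show ?thesis using ts by (simp add: mult_le_0_iff)
  qed
  have neg: "deriv f s \<le> deriv f t" if st: "s < t" and t0: "t < 0" for t
  proof -
    have sc: "strict_convex_on {..<0} f"
      using a unfolding admissible_psi_def by simp
    have cv: "convex_on {..<0} f" by (rule strict_imp_convex[OF sc])
    have D: "(f has_field_derivative deriv f z) (at z within {..<0})" for z
      by (rule has_field_derivative_at_within[OF DF])
    have cn: "connected ({..<0} :: real set)" by simp
    have int: "interior ({..<0} :: real set) = {..<0}" by (simp add: interior_open)
    have s0: "s \<in> {..<0}" "t \<in> {..<0}" using t0 st by auto
    have "f s - f t \<ge> (deriv f t) * (s - t)"
      using convex_on_imp_above_tangent[OF cv cn _ _ D, of t s] s0 int by simp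
    moreover have "f t - f s \<ge> (deriv f s) * (t - s)"
      using convex_on_imp_above_tangent[OF cv cn _ _ D, of s t] s0 int by simp
    ultimately have "(deriv f t - deriv f s) * (t - s) \<ge> 0" by (simp add: algebra_simps)
    then show ?thesis using st by (simp add: zero_le_mult_iff)
  qed
  show ?thesis
  proof (rule ccontr)
    assume "\<not> ?thesis"
    then have gt: "deriv f s > 1" by simp
    then have sne: "s \<noteq> 0" using d0 by auto
    have lim: "deriv f \<midarrow>0\<rightarrow> deriv f 0" using cont by (simp add: isCont_def)
    obtain d where d: "d > 0" and dd: "\<And>t. t \<noteq> 0 \<and> norm (t - 0) < d \<Longrightarrow> norm (deriv f t - deriv f 0) < deriv f s - 1"
      using LIM_D[OF lim, of "deriv f s - 1"] gt by auto
    show False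
    proof (cases "s > 0")
      case True
      define t where "t = min (d/2) (s/2)"
      have t: "0 < t" "t < s" "t < d" using d True by (auto simp: t_def)
      have "norm (deriv f t - deriv f 0) < deriv f s - 1" using dd[of t] t by simp
      then have "deriv f t < deriv f s" using d0 by simp
      then show False using pos[OF t(1,2)] by simp
    next
      case False
      with sne have sn: "s < 0" by simp
      define t where "t = max (-d/2) (s/2)"
      have t: "s < t" "t < 0" "-t < d" using d sn by (auto simp: t_def)
      have "norm (deriv f t - deriv f 0) < deriv f s - 1" using dd[of t] t by simp
      then have "deriv f t < deriv f s" using d0 by simp
      then show False using neg[OF t(1,2)] by simp
    qed
  qed
qed

lemma adm_lip: assumes a: "admissible_psi f" and uv: "u < v" shows "f v - f u < v - u"
proof -
  define h where "h x = x - f x" for x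
  have hD: "(h has_real_derivative 1 - deriv f x) (at x)" for x
  proof -
    have "((\<lambda>x. x - f x) has_real_derivative 1 - deriv f x) (at x)"
      by (rule DERIV_diff[OF DERIV_ident adm_DERIV[OF a]])
    then show ?thesis unfolding h_def[abs_def] .
  qed
  have hmono: "h x \<le> h y" if xy: "x \<le> y" for x y
  proof (rule DERIV_nonneg_imp_nondecreasing[OF xy])
    fix z assume "x \<le> z" "z \<le> y"
    have "0 \<le> 1 - deriv f z" using adm_deriv_le1[OF a, of z] by simp
    then show "\<exists>y. (h has_real_derivative y) (at z) \<and> 0 \<le> y" using hD[of z] by blast
  qed
  have "h u < h v"
  proof (rule ccontr)
    assume "\<not> h u < h v"
    then have eq: "h u = h v" using hmono[of u v] uv by simp
    have fl: "f x = x - h u" if "u \<le> x" "x \<le> v" for x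
    proof -
      have "h u \<le> h x" "h x \<le> h v" using hmono that by auto
      then have "h x = h u" using eq by simp
      then show ?thesis unfolding h_def by simp
    qed
    show False
    proof (cases "v \<le> 0")
      case True
      define p1 where "p1 = u + (v-u)/4"
      define p2 where "p2 = u + 3*(v-u)/4"
      define m where "m = u + (v-u)/2"
      have pp: "u \<le> p1" "p1 \<le> v" "u \<le> p2" "p2 \<le> v" "u \<le> m" "m \<le> v" "p1 < 0" "p2 < 0" "p1 \<noteq> p2"
        using uv True unfolding p1_def p2_def m_def by (auto simp: field_simps)
      have sc: "strict_convex_on {..<0} f" using a unfolding admissible_psi_def by simp
      have "f ((1 - 1/2) * p1 + (1/2) * p2) < (1 - 1/2) * f p1 + (1/2) * f p2"
        by (rule scD[OF sc]) (use pp in auto)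
      moreover have "(1 - 1/2) * p1 + (1/2) * p2 = m" by (simp add: p1_def p2_def m_def field_simps)
      ultimately have "f m < (1 - 1/2) * f p1 + (1/2) * f p2" by simp
      moreover have "f m = m - h u" "f p1 = p1 - h u" "f p2 = p2 - h u" using fl pp by auto
      ultimately show False by (simp add: p1_def p2_def m_def field_simps)
    next
      case False
      define w where "w = max u 0"
      have wv: "w < v" "u \<le> w" "0 \<le> w" using False uv by (auto simp: w_def)
      define p1 where "p1 = w + (v-w)/4"
      define p2 where "p2 = w + 3*(v-w)/4"
      define m where "m = w + (v-w)/2"
      have pp: "u \<le> p1" "p1 \<le> v" "u \<le> p2" "p2 \<le> v" "u \<le> m" "m \<le> v" "p1 > 0" "p2 > 0" "p1 \<noteq> p2"
        using wv uv unfolding p1_def p2_def m_def by (auto simp: field_simps)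
      have sc: "strict_convex_on {0<..} (\<lambda>x. - f x)"
        using a unfolding admissible_psi_def strict_concave_on_def by simp
      have "- f ((1 - 1/2) * p1 + (1/2) * p2) < (1 - 1/2) * (- f p1) + (1/2) * (- f p2)"
        using scD[OF sc, of p1 p2 "1/2"] pp by simp
      moreover have "(1 - 1/2) * p1 + (1/2) * p2 = m" by (simp add: p1_def p2_def m_def field_simps)
      ultimately have "- f m < (1 - 1/2) * (- f p1) + (1/2) * (- f p2)" by simp
      moreover have "f m = m - h u" "f p1 = p1 - h u" "f p2 = p2 - h u" using fl pp by auto
      ultimately show False by (simp add: p1_def p2_def m_def field_simps)
    qed
  qed
  then show ?thesis unfolding h_def by simp
qed




definition symm :: "real^'n^'n \<Rightarrow> bool" where
  "symm M \<longleftrightarrow> (\<forall>i j. M $ i $ j = M $ j $ i)"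

lemma symm_inner: assumes "symm M" shows "u \<bullet> (M *v v) = v \<bullet> (M *v u)"
proof -
  have "transpose M = M" using assms unfolding symm_def transpose_def by (simp add: vec_eq_iff)
  then have "u \<bullet> (M *v v) = (u v* M) \<bullet> v" by (simp add: dot_lmul_matrix)
  also have "\<dots> = (M *v u) \<bullet> v" using vector_transpose_matrix[of u M] \<open>transpose M = M\<close> by simp
  finally show ?thesis by (simp add: inner_commute)
qed

lemma sphere_ne: "sphere (0::real^'n) 1 \<noteq> {}"
  by (simp add: sphere_eq_empty)

lemma cont_quad: "continuous_on S (\<lambda>v::real^'n. v \<bullet> (M *v v))"
  by (intro continuous_intros matrix_vector_mult_linear_continuous_on[unfolded o_def]
        continuous_on_compose2[OF matrix_vector_mult_linear_continuous_on continuous_on_id]) auto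

lemma quad_max: "\<exists>u\<in>sphere (0::real^'n) 1. \<forall>v\<in>sphere 0 1. v \<bullet> (M *v v) \<le> u \<bullet> (M *v u)"
  by (rule continuous_attains_sup[OF compact_sphere sphere_ne cont_quad])

definition rq :: "real^'n^'n \<Rightarrow> real" where
  "rq M = Sup ((\<lambda>v. v \<bullet> (M *v v)) ` sphere 0 1)"

lemma rq_attained: obtains u where "u \<in> sphere 0 1" "rq M = u \<bullet> (M *v u)"
   "\<And>v. v \<in> sphere 0 1 \<Longrightarrow> v \<bullet> (M *v v) \<le> rq M"
proof -
  obtain u where u: "u\<in>sphere 0 1" "\<And>v. v\<in>sphere 0 1 \<Longrightarrow> v \<bullet> (M *v v) \<le> u \<bullet> (M *v u)"
    using quad_max by blast
  have "rq M = u \<bullet> (M *v u)" unfolding rq_def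
    by (rule cSup_eq_maximum) (use u in auto)
  with u that show ?thesis by auto
qed

lemma rq_upper: "v \<in> sphere 0 1 \<Longrightarrow> v \<bullet> (M *v v) \<le> rq M"
proof -
  assume v: "v \<in> sphere 0 1"
  obtain u where "u \<in> sphere 0 1" "rq M = u \<bullet> (M *v u)"
   "\<And>v. v \<in> sphere 0 1 \<Longrightarrow> v \<bullet> (M *v v) \<le> rq M" by (rule rq_attained[of M]) blast
  then show ?thesis using v by blast
qed

lemma rq_least: "(\<And>v. v \<in> sphere 0 1 \<Longrightarrow> v \<bullet> (M *v v) \<le> c) \<Longrightarrow> rq M \<le> c"
proof -
  assume h: "\<And>v. v \<in> sphere 0 1 \<Longrightarrow> v \<bullet> (M *v v) \<le> c"
  obtain u where "u \<in> sphere 0 1" "rq M = u \<bullet> (M *v u)"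
   "\<And>v. v \<in> sphere 0 1 \<Longrightarrow> v \<bullet> (M *v v) \<le> rq M" by (rule rq_attained[of M]) blast
  then show ?thesis using h by simp
qed

lemma quad_scale: "(c *\<^sub>R v) \<bullet> ((M::real^'n^'n) *v (c *\<^sub>R v)) = c^2 * (v \<bullet> (M *v v))"
  by (simp add: matrix_vector_mult_scaleR power2_eq_square)

lemma rq_all: "z \<bullet> (M *v z) \<le> rq M * (z \<bullet> z)"
proof (cases "z = 0")
  case True then show ?thesis by simp
next
  case False
  define v where "v = (1 / norm z) *\<^sub>R z"
  have v: "v \<in> sphere 0 1" using False by (simp add: v_def)
  obtain n where n: "n = norm z" by blast
  have "z = n *\<^sub>R v" using False by (simp add: v_def n)
  then have "z \<bullet> (M *v z) = (n *\<^sub>R v) \<bullet> (M *v (n *\<^sub>R v))" by simp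
  also have "\<dots> = n^2 * (v \<bullet> (M *v v))" by (rule quad_scale)
  finally have "z \<bullet> (M *v z) = (norm z)^2 * (v \<bullet> (M *v v))" using n by simp
  also have "\<dots> \<le> (norm z)^2 * rq M" using rq_upper[OF v] by (simp add: mult_left_mono)
  finally show ?thesis by (simp add: power2_norm_eq_inner mult.commute)
qed

lemma eig_le_rq: assumes "l \<in> eigenvalues M" shows "l \<le> rq M"
proof -
  obtain v where v: "v \<noteq> 0" "M *v v = l *\<^sub>R v" using assms unfolding eigenvalues_def by blast
  have "l * (v \<bullet> v) \<le> rq M * (v \<bullet> v)" using rq_all[of v M] v by simp
  moreover have "v \<bullet> v > 0" using v by simp
  ultimately show ?thesis by simp
qed

lemma rq_eig: assumes s: "symm M" shows "rq M \<in> eigenvalues M"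
proof -
  obtain u where u: "u \<in> sphere 0 1" "rq M = u \<bullet> (M *v u)"
   "\<And>v. v \<in> sphere 0 1 \<Longrightarrow> v \<bullet> (M *v v) \<le> rq M" by (rule rq_attained[of M]) blast
  define g where "g = rq M"
  define r where "r = g *\<^sub>R u - M *v u"
  have uu: "u \<bullet> u = 1" using u by (simp add: dot_square_norm)
  have ur: "u \<bullet> r = 0" using u uu by (simp add: r_def g_def inner_diff_right)
  have rMu: "r \<bullet> (M *v u) = - (r \<bullet> r)"
  proof -
    have "M *v u = g *\<^sub>R u - r" by (simp add: r_def)
    then have "r \<bullet> (M *v u) = g * (r \<bullet> u) - r \<bullet> r" by (simp add: inner_diff_right)
    then show ?thesis using ur by (simp add: inner_commute)
  qed
  define a where "a = r \<bullet> r"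
  define c where "c = g * a - r \<bullet> (M *v r)"
  have c0: "c \<ge> 0" using rq_all[of r M] by (simp add: c_def a_def g_def)
  have ineq: "2 * t * a \<le> t^2 * c" for t
  proof -
    let ?z = "u - t *\<^sub>R r"
    have "?z \<bullet> (M *v ?z) = u \<bullet> (M *v u) - t * (u \<bullet> (M *v r)) - t * (r \<bullet> (M *v u)) + t^2 * (r \<bullet> (M *v r))"
    proof -
      have "M *v ?z = M *v u - t *\<^sub>R (M *v r)"
        by (simp add: matrix_vector_mult_diff_distrib matrix_vector_mult_scaleR)
      then have "?z \<bullet> (M *v ?z) = u \<bullet> (M *v u) - t * (u \<bullet> (M *v r)) - t * (r \<bullet> (M *v u)) + t * t * (r \<bullet> (M *v r))"
        by (simp add: inner_diff_left inner_diff_right right_diff_distrib)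
      then show ?thesis by (simp add: power2_eq_square)
    qed
    also have "\<dots> = g + 2 * t * a + t^2 * (r \<bullet> (M *v r))"
      using symm_inner[OF s, of u r] rMu u(2) by (simp add: g_def a_def)
    finally have l: "?z \<bullet> (M *v ?z) = g + 2 * t * a + t^2 * (r \<bullet> (M *v r))" .
    have "?z \<bullet> ?z = 1 + t^2 * a"
    proof -
      have ru: "r \<bullet> u = 0" using ur by (simp add: inner_commute)
      have "?z \<bullet> ?z = u \<bullet> u - t * (u \<bullet> r) - t * (r \<bullet> u) + t * t * (r \<bullet> r)"
        by (simp add: inner_diff_left inner_diff_right right_diff_distrib)
      then show ?thesis using uu ur ru by (simp add: a_def power2_eq_square)
    qed
    with l rq_all[of ?z M] have "g + 2 * t * a + t^2 * (r \<bullet> (M *v r)) \<le> g * (1 + t^2 * a)"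
      by (simp add: g_def)
    then show ?thesis by (simp add: c_def algebra_simps)
  qed
  have "a = 0"
  proof (rule ccontr)
    assume "a \<noteq> 0"
    then have ap: "a > 0" by (simp add: a_def)
    define t where "t = a / (c + 1)"
    have tp: "t > 0" using ap c0 by (simp add: t_def)
    have "2 * t * a \<le> t * (t * c)" using ineq[of t] by (simp add: power2_eq_square mult.assoc)
    then have "2 * a \<le> t * c" using tp by simp
    moreover have "t * c < a" using ap c0 by (simp add: t_def field_simps)
    ultimately show False using ap by simp
  qed
  then have "r = 0" by (simp add: a_def)
  then have "M *v u = g *\<^sub>R u" by (simp add: r_def)
  moreover have "u \<noteq> 0" using u by auto
  ultimately show ?thesis unfolding eigenvalues_def g_def by blast
qed

lemma eig_finite: assumes s: "symm M" shows "finite (eigenvalues M)"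
proof -
  define E where "E = eigenvalues M"
  define ev where "ev l = (SOME v. v \<noteq> 0 \<and> M *v v = l *\<^sub>R v)" for l
  have ev: "ev l \<noteq> 0 \<and> M *v ev l = l *\<^sub>R ev l" if "l \<in> E" for l
    unfolding ev_def by (rule someI_ex) (use that in \<open>auto simp: E_def eigenvalues_def\<close>)
  have orth: "ev l \<bullet> ev l' = 0" if "l \<in> E" "l' \<in> E" "l \<noteq> l'" for l l'
  proof -
    have "l * (ev l' \<bullet> ev l) = ev l' \<bullet> (M *v ev l)" using ev[OF that(1)] by simp
    also have "\<dots> = ev l \<bullet> (M *v ev l')" by (rule symm_inner[OF s])
    also have "\<dots> = l' * (ev l \<bullet> ev l')" using ev[OF that(2)] by simp
    finally have "(l - l') * (ev l \<bullet> ev l') = 0" by (simp add: inner_commute algebra_simps)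
    then show ?thesis using that by simp
  qed
  have inj: "inj_on ev E"
  proof (rule inj_onI)
    fix l l' assume "l \<in> E" "l' \<in> E" "ev l = ev l'"
    show "l = l'"
    proof (rule ccontr)
      assume "l \<noteq> l'"
      then have "ev l \<bullet> ev l = 0" using orth[of l l'] \<open>l \<in> E\<close> \<open>l' \<in> E\<close> \<open>ev l = ev l'\<close> by simp
      then show False using ev[OF \<open>l \<in> E\<close>] by simp
    qed
  qed
  have "pairwise orthogonal (ev ` E)"
    unfolding pairwise_def orthogonal_def
  proof (intro ballI impI)
    fix x y assume "x \<in> ev ` E" "y \<in> ev ` E" "x \<noteq> y"
    then obtain l l' where "l \<in> E" "l' \<in> E" "x = ev l" "y = ev l'" by blast
    then show "x \<bullet> y = 0" using orth[of l l'] \<open>x \<noteq> y\<close> by blast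
  qed
  moreover have "0 \<notin> ev ` E" using ev by auto
  ultimately have "independent (ev ` E)" by (rule pairwise_orthogonal_independent)
  then have "finite (ev ` E)" by (rule finiteI_independent)
  then show ?thesis using finite_imageD inj E_def by blast
qed

lemma lambda_max_rq: assumes "symm M" shows "lambda_max M = rq M"
  unfolding lambda_max_def
  by (rule Max_eqI[OF eig_finite[OF assms] eig_le_rq rq_eig[OF assms]])




lemma L_mult: "(L_pi A q :: real^'n^'n) *v v = Delta_mat A *v v - q *\<^sub>R (A *v v)"
  by (simp add: L_pi_def matrix_vector_mult_diff_rdistrib scaleR_matrix_vector_assoc)

lemma Delta_mult: "(Delta_mat A *v v) $ i = sdegree A i * v $ i"
proof -
  have "(\<Sum>j\<in>UNIV. (if i = j then sdegree A i else 0) * v $ j) = (\<Sum>j\<in>UNIV. if i = j then sdegree A i * v $ j else 0)"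
    by (rule sum.cong) auto
  also have "\<dots> = sdegree A i * v $ i" by simp
  finally show ?thesis unfolding Delta_mat_def matrix_vector_mult_def by simp
qed

lemma L_mult_comp: "((L_pi A q :: real^'n^'n) *v v) $ i = sdegree A i * v $ i - q * (A *v v) $ i"
  by (simp add: L_mult Delta_mult)

lemma quad_L: "v \<bullet> ((L_pi A q :: real^'n^'n) *v v) = v \<bullet> (Delta_mat A *v v) - q * (v \<bullet> (A *v v))"
  by (simp add: L_mult inner_diff_right)

lemma symm_L: assumes "\<forall>i j. A $ i $ j = A $ j $ i" shows "symm (L_pi A q)"
  using assms unfolding symm_def L_pi_def Delta_mat_def by auto

lemma neg_quad: "v \<bullet> ((- A :: real^'n^'n) *v v) = - (v \<bullet> (A *v v))"
proof -
  have "(- A) *v v = - (A *v v)" by (simp add: vec_eq_iff matrix_vector_mult_def sum_negf)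
  then show ?thesis by simp
qed

lemma rq_lip: "rq (L_pi A q) \<le> rq (L_pi A q') + (\<bar>rq A\<bar> + \<bar>rq (- A)\<bar>) * \<bar>q - q'\<bar>"
  for A :: "real^'n^'n"
proof (rule rq_least)
  fix v :: "real^'n" assume v: "v \<in> sphere 0 1"
  have b1: "v \<bullet> (A *v v) \<le> rq A" by (rule rq_upper[OF v])
  have b2: "- (v \<bullet> (A *v v)) \<le> rq (- A)" using rq_upper[OF v, of "- A"] by (simp add: neg_quad)
  have ab: "\<bar>v \<bullet> (A *v v)\<bar> \<le> \<bar>rq A\<bar> + \<bar>rq (- A)\<bar>" using b1 b2 by linarith
  have "v \<bullet> (L_pi A q *v v) = v \<bullet> (L_pi A q' *v v) + (q' - q) * (v \<bullet> (A *v v))"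
    by (simp add: quad_L algebra_simps)
  also have "\<dots> \<le> rq (L_pi A q') + \<bar>q - q'\<bar> * \<bar>v \<bullet> (A *v v)\<bar>"
  proof -
    have "(q' - q) * (v \<bullet> (A *v v)) \<le> \<bar>q - q'\<bar> * \<bar>v \<bullet> (A *v v)\<bar>"
      by (metis abs_ge_self abs_minus_commute abs_mult)
    then show ?thesis using rq_upper[OF v, of "L_pi A q'"] by linarith
  qed
  also have "\<dots> \<le> rq (L_pi A q') + (\<bar>rq A\<bar> + \<bar>rq (- A)\<bar>) * \<bar>q - q'\<bar>"
    using ab by (simp add: mult.commute mult_left_mono)
  finally show "v \<bullet> (L_pi A q *v v) \<le> rq (L_pi A q') + (\<bar>rq A\<bar> + \<bar>rq (- A)\<bar>) * \<bar>q - q'\<bar>" .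
qed

lemma rq_cont: "continuous_on S (\<lambda>q. rq (L_pi (A::real^'n^'n) q))"
proof -
  define C where "C = \<bar>rq A\<bar> + \<bar>rq (- A)\<bar>"
  have "C-lipschitz_on S (\<lambda>q. rq (L_pi A q))"
  proof (rule lipschitz_onI)
    fix x y assume "x \<in> S" "y \<in> S"
    have "rq (L_pi A x) \<le> rq (L_pi A y) + C * \<bar>x - y\<bar>" unfolding C_def by (rule rq_lip)
    moreover have "rq (L_pi A y) \<le> rq (L_pi A x) + C * \<bar>y - x\<bar>" unfolding C_def by (rule rq_lip)
    ultimately show "dist (rq (L_pi A x)) (rq (L_pi A y)) \<le> C * dist x y"
      by (simp add: dist_real_def abs_minus_commute abs_le_iff)
  next
    show "0 \<le> C" by (simp add: C_def)
  qed
  then show ?thesis by (rule lipschitz_on_continuous_on)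
qed

lemma quad_Delta: "v \<bullet> (Delta_mat A *v v) = (\<Sum>i\<in>UNIV. sdegree A i * (v $ i)^2)"
  by (simp add: inner_vec_def Delta_mult power2_eq_square mult_ac)

lemma rq_zero: fixes A :: "real^'n^'n"
  shows "rq (L_pi A 0) \<le> Max (range (sdegree A))"
proof (rule rq_least)
  fix v :: "real^'n" assume v: "v \<in> sphere 0 1"
  have "v \<bullet> v = 1" using v by (simp add: dot_square_norm)
  then have vv: "(\<Sum>i\<in>UNIV. (v $ i)^2) = 1" by (simp add: inner_vec_def power2_eq_square)
  have "v \<bullet> (L_pi A 0 *v v) = (\<Sum>i\<in>UNIV. sdegree A i * (v $ i)^2)" by (simp add: quad_L quad_Delta)
  also have "\<dots> \<le> (\<Sum>i\<in>UNIV. Max (range (sdegree A)) * (v $ i)^2)"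
    by (intro sum_mono mult_right_mono) auto
  also have "\<dots> = Max (range (sdegree A))" using vv by (simp add: sum_distrib_left[symmetric])
  finally show "v \<bullet> (L_pi A 0 *v v) \<le> Max (range (sdegree A))" .
qed




lemma psi_pair: assumes a: "admissible_psi f"
  shows "(f s - f t) * ((s - t) - (f s - f t)) \<ge> 0"
    and "s \<noteq> t \<Longrightarrow> (f s - f t) * ((s - t) - (f s - f t)) > 0"
    and "s \<noteq> t \<Longrightarrow> f s - f t \<noteq> 0"
proof -
  have c: "(f s - f t) * ((s - t) - (f s - f t)) > 0 \<and> f s - f t \<noteq> 0" if "s \<noteq> t"
  proof (cases "s < t")
    case True
    have "f s < f t" using adm_mono[OF a True] .
    moreover have "f t - f s < t - s" using adm_lip[OF a True] .
    ultimately show ?thesis by (simp add: mult_neg_neg)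
  next
    case False
    with that have ts: "t < s" by simp
    have "f t < f s" using adm_mono[OF a ts] .
    moreover have "f s - f t < s - t" using adm_lip[OF a ts] .
    ultimately show ?thesis by simp
  qed
  then show "s \<noteq> t \<Longrightarrow> (f s - f t) * ((s - t) - (f s - f t)) > 0"
    and "s \<noteq> t \<Longrightarrow> f s - f t \<noteq> 0" by auto
  show "(f s - f t) * ((s - t) - (f s - f t)) \<ge> 0"
    using c by (cases "s = t") (auto intro: less_imp_le)
qed

theorem lemma4:
  fixes A :: "real^'n^'n" and psi :: "'n \<Rightarrow> real \<Rightarrow> real"
    and x :: "nat \<Rightarrow> real^'n" and p eps :: real and K :: nat
  assumes graph: "connected_signed_graph A"
    and deg_pos: "\<forall>i. sdegree A i > 0"
    and psi: "\<forall>i. admissible_psi (psi i)"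
    and p_pos: "p > 0"
    and eps_pos: "0 < eps"
    and eps_bound: "eps < 2 / Max (range (sdegree A))"
    and dyn: "\<forall>k. x (Suc k) = x k - eps *\<^sub>R (Delta_mat A *v x k)
                 + (eps * p) *\<^sub>R (A *v (\<chi> i. psi i (x k $ i)))"
    and orbit: "x (Suc K) \<noteq> x K" "\<forall>k\<ge>K. x (k + 2) = x k"
  shows "p > pi_1d A eps"
proof -
  have symA: "\<forall>i j. A $ i $ j = A $ j $ i" using graph unfolding connected_signed_graph_def by blast
  define G where "G q = rq (L_pi A q)" for q
  define mx where "mx = Max (range (sdegree A))"
  have mx_ge: "sdegree A i \<le> mx" for i unfolding mx_def by (rule Max_ge) auto
  have mx_pos: "mx > 0" using mx_ge[of undefined] deg_pos by (meson less_le_trans)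
  have epsmx: "eps * mx < 2" using eps_bound mx_pos by (simp add: mx_def field_simps)
  have deg_lt: "sdegree A i < 2 / eps" for i
  proof -
    have "eps * sdegree A i < 2" using mx_ge[of i] eps_pos epsmx
      by (meson le_less_trans mult_left_mono less_imp_le)
    then show ?thesis using eps_pos by (simp add: field_simps)
  qed
  have G0: "G 0 < 2 / eps"
  proof -
    have "G 0 \<le> mx" unfolding G_def mx_def by (rule rq_zero)
    moreover have "mx < 2 / eps" using epsmx eps_pos by (simp add: field_simps)
    ultimately show ?thesis by simp
  qed
  define a where "a = x K"
  define b where "b = x (Suc K)"
  define Psi where "Psi y = (\<chi> i. psi i (y $ i))" for y :: "real^'n"
  have ab: "b = a - eps *\<^sub>R (Delta_mat A *v a) + (eps * p) *\<^sub>R (A *v Psi a)"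
    using dyn unfolding a_def b_def Psi_def by blast
  have "x (K + 2) = x K" using orbit(2) by simp
  then have "x (Suc (Suc K)) = a" by (simp add: a_def)
  then have ba: "a = b - eps *\<^sub>R (Delta_mat A *v b) + (eps * p) *\<^sub>R (A *v Psi b)"
    using dyn unfolding a_def b_def Psi_def by metis
  define d where "d = a - b"
  define w where "w = Psi a - Psi b"
  have dne: "d \<noteq> 0" using orbit(1) by (simp add: d_def a_def b_def)
  have veq: "eps *\<^sub>R (Delta_mat A *v d) - (eps * p) *\<^sub>R (A *v w) = 2 *\<^sub>R d"
  proof -
    have "b - a = (a - eps *\<^sub>R (Delta_mat A *v a) + (eps * p) *\<^sub>R (A *v Psi a))
         - (b - eps *\<^sub>R (Delta_mat A *v b) + (eps * p) *\<^sub>R (A *v Psi b))"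
      using ab ba by (rule arg_cong2[where f="(-)"])
    note eqv = this
    show ?thesis
      unfolding vec_eq_iff
    proof
      fix i
      have "(b - a) $ i = ((a - eps *\<^sub>R (Delta_mat A *v a) + (eps * p) *\<^sub>R (A *v Psi a))
         - (b - eps *\<^sub>R (Delta_mat A *v b) + (eps * p) *\<^sub>R (A *v Psi b))) $ i"
        using eqv by (rule arg_cong)
      then have h: "b $ i - a $ i = a $ i - eps * (Delta_mat A *v a) $ i + (eps * p) * (A *v Psi a) $ i
         - (b $ i - eps * (Delta_mat A *v b) $ i + (eps * p) * (A *v Psi b) $ i)"
        by (simp only: vector_minus_component vector_add_component vector_scaleR_component real_scaleR_def)
      have "(eps *\<^sub>R (Delta_mat A *v d) - (eps * p) *\<^sub>R (A *v w)) $ i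
          = eps * ((Delta_mat A *v a) $ i - (Delta_mat A *v b) $ i) - (eps * p) * ((A *v Psi a) $ i - (A *v Psi b) $ i)"
        by (simp only: d_def w_def matrix_vector_mult_diff_distrib vector_minus_component vector_scaleR_component real_scaleR_def)
      also have "\<dots> = (2 *\<^sub>R d) $ i"
        using h by (simp only: d_def vector_minus_component vector_scaleR_component real_scaleR_def) (simp add: algebra_simps)
      finally show "(eps *\<^sub>R (Delta_mat A *v d) - (eps * p) *\<^sub>R (A *v w)) $ i = (2 *\<^sub>R d) $ i" .
    qed
  qed
  have comp: "eps * sdegree A i * d $ i - eps * p * (A *v w) $ i = 2 * d $ i" for i
  proof -
    have "(eps *\<^sub>R (Delta_mat A *v d) - (eps * p) *\<^sub>R (A *v w)) $ i = (2 *\<^sub>R d) $ i"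
      using veq by simp
    then show ?thesis by (simp add: Delta_mult mult.assoc)
  qed
  have pAw: "p * (A *v w) $ i = sdegree A i * d $ i - (2 / eps) * d $ i" for i
    using comp[of i] eps_pos by (simp add: field_simps)
  have wi: "w $ i = psi i (a $ i) - psi i (b $ i)" for i by (simp add: w_def Psi_def)
  have di: "d $ i = a $ i - b $ i" for i by (simp add: d_def)
  have term_nonneg: "w $ i * (d $ i - w $ i) \<ge> 0" for i
    using psi_pair(1)[of "psi i" "a $ i" "b $ i"] psi by (simp add: wi di)
  obtain i0 where i0: "d $ i0 \<noteq> 0" using dne by (metis vec_eq_iff zero_index)
  have term_pos: "w $ i0 * (d $ i0 - w $ i0) > 0"
    using psi_pair(2)[of "psi i0" "a $ i0" "b $ i0"] psi i0 by (simp add: wi di)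
  have wne: "w \<noteq> 0"
  proof
    assume "w = 0"
    then have "w $ i0 = 0" by simp
    then show False using term_pos by simp
  qed
  have Qw: "w \<bullet> (L_pi A p *v w) - (2 / eps) * (w \<bullet> w) = (\<Sum>i\<in>UNIV. (2 / eps - sdegree A i) * (w $ i * (d $ i - w $ i)))"
  proof -
    have "w \<bullet> (L_pi A p *v w) - (2 / eps) * (w \<bullet> w) = (\<Sum>i\<in>UNIV. w $ i * (sdegree A i * w $ i - p * (A *v w) $ i) - (2 / eps) * (w $ i * w $ i))"
      by (simp add: inner_vec_def L_mult_comp sum_subtractf sum_distrib_left)
    also have "\<dots> = (\<Sum>i\<in>UNIV. (2 / eps - sdegree A i) * (w $ i * (d $ i - w $ i)))"
      by (rule sum.cong) (simp_all add: pAw algebra_simps)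
    finally show ?thesis .
  qed
  have Qpos: "w \<bullet> (L_pi A p *v w) - (2 / eps) * (w \<bullet> w) > 0"
    unfolding Qw
  proof (rule sum_pos2[of UNIV i0])
    show "0 < (2 / eps - sdegree A i0) * (w $ i0 * (d $ i0 - w $ i0))"
      using term_pos deg_lt[of i0] by simp
    show "\<And>i. i \<in> UNIV \<Longrightarrow> 0 \<le> (2 / eps - sdegree A i) * (w $ i * (d $ i - w $ i))"
      using term_nonneg deg_lt by (simp add: less_imp_le)
  qed auto
  have Gp: "G p > 2 / eps"
  proof -
    define v where "v = (1 / norm w) *\<^sub>R w"
    have v: "v \<in> sphere 0 1" using wne by (simp add: v_def)
    have nw: "norm w > 0" using wne by simp
    have "v \<bullet> (L_pi A p *v v) = (1 / norm w)^2 * (w \<bullet> (L_pi A p *v w))"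
      unfolding v_def by (rule quad_scale)
    also have "\<dots> > (1 / norm w)^2 * ((2 / eps) * (w \<bullet> w))"
      using Qpos nw by (intro mult_strict_left_mono) auto
    also have "(1 / norm w)^2 * ((2 / eps) * (w \<bullet> w)) = 2 / eps"
      using nw by (simp add: dot_square_norm field_simps)
    finally have "v \<bullet> (L_pi A p *v v) > 2 / eps" .
    moreover have "v \<bullet> (L_pi A p *v v) \<le> G p" unfolding G_def by (rule rq_upper[OF v])
    ultimately show ?thesis by simp
  qed
  have cont: "continuous_on {0..p} G" unfolding G_def by (rule rq_cont)
  obtain q where q: "0 \<le> q" "q \<le> p" "G q = 2 / eps"
    using IVT'[of G 0 "2 / eps" p, OF less_imp_le[OF G0] less_imp_le[OF Gp] less_imp_le[OF p_pos] cont] by blast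
  have qpos: "q > 0" using q G0 by (cases "q = 0") auto
  have qlt: "q < p" using q Gp by (cases "q = p") auto
  have "lambda_max (L_pi A q) = G q" unfolding G_def by (rule lambda_max_rq[OF symm_L[OF symA]])
  with q have mem: "q \<in> {p. p > 0 \<and> lambda_max (L_pi A p) = 2 / eps}" using qpos by simp
  have "pi_1d A eps \<le> q" unfolding pi_1d_def
    by (rule cInf_lower[OF mem]) (auto intro: bdd_belowI[where m=0])
  then show ?thesis using qlt by simp
qed


end
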